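(* Let $F=\sum_{g\ge0}\lambda^{2g-2}F_g$ be the dessin free energy (defined in the context) and define $$G_{0,2}(x_1,x_2)=\sum_{a,b\ge1} ab\,\frac{\partial^2F_0}{\partial p_a\partial p_b}\Big|_{p=0}\,x_1^{-a-1}x_2^{-b-1}.$$ Then, as formal series in $x_1^{-1},x_2^{-1}$, $$G_{0,2}(x_1,x_2)=\frac{1-\frac{s(u+v)}{x_1}-\frac{s(u+v)}{x_2}+\frac{s^2(u-v)^2}{x_1x_2}}{2(x_1-x_2)^2\sqrt{\Big(1-\frac{2s(u+v)}{x_1}+\frac{s^2(u-v)^2}{x_1^2}\Big)\Big(1-\frac{2s(u+v)}{x_2}+\frac{s^2(u-v)^2}{x_2^2}\Big)}}-\frac{1}{2(x_1-x_2)^2},$$ where the square roots are the power series in $x_i^{-1}$ with constant term $1$.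
   Context: Let $s,u,v$ be parameters and $\lambda$ a genus-tracking parameter. For $n\ge0$ define $$L_n=-\frac{n+1}{s}\frac{\partial}{\partial p_{n+1}}+(u+v)n\frac{\partial}{\partial p_n}+\sum_{j\ge1}p_j(n+j)\frac{\partial}{\partial p_{n+j}}+\lambda^2\sum_{i+j=n,\ i,j\ge1}ij\frac{\partial^2}{\partial p_i\partial p_j}+\delta_{n,0}\,uv\,\lambda^{-2}.$$ The dessin free energy $F=\sum_{g\ge0}\lambda^{2g-2}F_g$ (logarithm of the Kazarian–Zograf generating series of Grothendieck's dessins d'enfants, each $F_g$ a formal power series in $p_1,p_2,\dots$ vanishing at $p=0$) is characterized by $L_ne^F=0$ for all $n\ge0$. *)

theory Defs
  imports "HOL-Library.Multiset" "HOL-Computational_Algebra.Formal_Power_Series"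
begin

text \<open>Formal power series in the infinitely many variables p_1, p_2, ... are
represented by their coefficient functions: a monomial
p_{m_1} ... p_{m_k} is encoded by the multiset of indices, and a series is
f :: nat multiset => real, with the coefficient of p^mu being f mu
(no symmetry factors).  Only multisets of positive indices are meaningful.\<close>

type_synonym pseries = "nat multiset \<Rightarrow> real"

definition pderiv_p :: "nat \<Rightarrow> pseries \<Rightarrow> pseries" where
  "pderiv_p k f = (\<lambda>\<mu>. real (count \<mu> k + 1) * f (\<mu> + {#k#}))"

definition pmult :: "pseries \<Rightarrow> pseries \<Rightarrow> pseries" where
  "pmult f g = (\<lambda>\<mu>. \<Sum>\<nu>\<in>{\<nu>. \<nu> \<subseteq># \<mu>}. f \<nu> * g (\<mu> - \<nu>))"

text \<open>The coefficient at p^mu of the operator  sum_{j>=1} p_j (n+j) d/dp_{n+j}  applied to f.\<close>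
definition euler_part :: "nat \<Rightarrow> pseries \<Rightarrow> pseries" where
  "euler_part n f = (\<lambda>\<mu>. \<Sum>j\<in>{j\<in>set_mset \<mu>. 1 \<le> j}.
       real (n + j) * pderiv_p (n + j) f (\<mu> - {#j#}))"

text \<open>Genus expansion of  e^{-F} L_n e^F = 0, where F = sum_g lambda^(2g-2) F_g:
the coefficient of lambda^(2g-2) at the monomial p^mu.\<close>
definition dessin_constraint ::
    "real \<Rightarrow> real \<Rightarrow> real \<Rightarrow> (nat \<Rightarrow> pseries) \<Rightarrow> nat \<Rightarrow> nat \<Rightarrow> pseries" where
  "dessin_constraint s u v F n g = (\<lambda>\<mu>.
      - (real (n + 1) / s) * pderiv_p (n + 1) (F g) \<mu>
      + (u + v) * real n * pderiv_p n (F g) \<mu>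
      + euler_part n (F g) \<mu>
      + (\<Sum>i\<in>{1..<n}. real i * real (n - i) *
           ((if 1 \<le> g then pderiv_p i (pderiv_p (n - i) (F (g - 1))) \<mu> else 0)
            + (\<Sum>h\<le>g. pmult (pderiv_p i (F h)) (pderiv_p (n - i) (F (g - h))) \<mu>)))
      + (if n = 0 \<and> g = 0 \<and> \<mu> = {#} then u * v else 0))"

definition is_dessin_free_energy ::
    "real \<Rightarrow> real \<Rightarrow> real \<Rightarrow> (nat \<Rightarrow> pseries) \<Rightarrow> bool" where
  "is_dessin_free_energy s u v F \<longleftrightarrow>
     (\<forall>g \<mu>. 0 \<in># \<mu> \<longrightarrow> F g \<mu> = 0) \<and>
     (\<forall>g. F g {#} = 0) \<and>
     (\<forall>n g \<mu>. 0 \<notin># \<mu> \<longrightarrow> dessin_constraint s u v F n g \<mu> = 0)"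

text \<open>Bivariate formal power series in y1 = 1/x1 (outer) and y2 = 1/x2 (inner).\<close>
definition emb1 :: "real fps \<Rightarrow> real fps fps" where
  "emb1 a = Abs_fps (\<lambda>m. fps_const (fps_nth a m))"

definition emb2 :: "real fps \<Rightarrow> real fps fps" where
  "emb2 a = fps_const a"

definition Y1 :: "real fps fps" where "Y1 = fps_X"
definition Y2 :: "real fps fps" where "Y2 = fps_const fps_X"

definition G02 :: "(nat \<Rightarrow> pseries) \<Rightarrow> real fps fps" where
  "G02 F = Abs_fps (\<lambda>m. Abs_fps (\<lambda>n.
      if 2 \<le> m \<and> 2 \<le> n then
        real (m - 1) * real (n - 1) * pderiv_p (m - 1) (pderiv_p (n - 1) (F 0)) {#}
      else 0))"

definition Pdisc :: "real \<Rightarrow> real \<Rightarrow> real \<Rightarrow> real fps" where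
  "Pdisc s u v = 1 - fps_const (2 * s * (u + v)) * fps_X + fps_const (s^2 * (u - v)^2) * fps_X ^ 2"

definition sqrtP :: "real \<Rightarrow> real \<Rightarrow> real \<Rightarrow> real fps" where
  "sqrtP s u v = fps_radical (\<lambda>_ _. 1) 2 (Pdisc s u v)"

end

theory Submission
  imports Defs
begin

unbundle fps_syntax




lemma pderiv_empty: "pderiv_p k f {#} = f {#k#}"
  by (simp add: pderiv_p_def)

lemma pderiv_single: "pderiv_p a f {#b#} = pderiv_p a (pderiv_p b f) {#}"
  by (simp add: pderiv_p_def add_mset_commute)

lemma euler_empty: "euler_part n f {#} = 0"
  by (simp add: euler_part_def)

lemma euler_single: "1 \<le> b \<Longrightarrow> euler_part n f {#b#} = real (n + b) * f {#n + b#}"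
proof -
  assume b: "1 \<le> b"
  have eq: "{j \<in> set_mset {#b#}. 1 \<le> j} = {b}" using b by auto
  show ?thesis unfolding euler_part_def eq by (simp add: pderiv_p_def)
qed

lemma pmult_empty: "pmult f g {#} = f {#} * g {#}"
  by (simp add: pmult_def)

lemma subsets_single: "{\<nu>. \<nu> \<subseteq># {#b#}} = {{#}, {#b#}}"
proof (rule set_eqI, rule iffI)
  fix x assume "x \<in> {\<nu>. \<nu> \<subseteq># {#b#}}"
  then show "x \<in> {{#}, {#b#}}" by (cases x) auto
qed auto

lemma pmult_single: "pmult f g {#b#} = f {#} * g {#b#} + f {#b#} * g {#}"
  by (simp add: pmult_def subsets_single)


definition cf :: "(nat \<Rightarrow> pseries) \<Rightarrow> nat \<Rightarrow> real" where
  "cf F a = real a * F 0 {#a#}"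

definition ee :: "(nat \<Rightarrow> pseries) \<Rightarrow> nat \<Rightarrow> nat \<Rightarrow> real" where
  "ee F a b = pderiv_p a (pderiv_p b (F 0)) {#}"

definition cc :: "(nat \<Rightarrow> pseries) \<Rightarrow> nat \<Rightarrow> nat \<Rightarrow> real" where
  "cc F a b = real a * real b * ee F a b"

lemma conv_trunc:
  fixes g h :: "nat \<Rightarrow> real"
  assumes "g 0 = 0" "h 0 = 0"
  shows "(\<Sum>i=0..n. g i * h (n - i)) = (\<Sum>i\<in>{1..<n}. g i * h (n - i))"
proof (rule sum.mono_neutral_right)
  show "\<forall>i\<in>{0..n} - {1..<n}. g i * h (n - i) = 0"
  proof
    fix i assume "i \<in> {0..n} - {1..<n}"
    then have "i = 0 \<or> i = n" by auto
    then show "g i * h (n - i) = 0" using assms by auto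
  qed
qed auto

lemma conv_comm:
  fixes g h :: "nat \<Rightarrow> real"
  shows "(\<Sum>i=0..n. g i * h (n - i)) = (\<Sum>i=0..n. h i * g (n - i))"
proof -
  have "(Abs_fps g * Abs_fps h) $ n = (Abs_fps h * Abs_fps g) $ n" by (simp add: mult.commute)
  then show ?thesis by (simp add: fps_mult_nth)
qed

lemma rec1:
  assumes s: "s \<noteq> 0" and FE: "is_dessin_free_energy s u v F"
  shows "cf F (Suc n) = s * ((u + v) * cf F n + (\<Sum>i=0..n. cf F i * cf F (n - i))
            + (if n = 0 then u * v else 0))"
proof -
  have "dessin_constraint s u v F n 0 {#} = 0" using FE unfolding is_dessin_free_energy_def by auto
  then have eq: "- (real (n + 1) / s) * F 0 {#n+1#} + (u + v) * real n * F 0 {#n#}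
      + (\<Sum>i\<in>{1..<n}. real i * real (n - i) * (F 0 {#i#} * F 0 {#n-i#}))
      + (if n = 0 then u * v else 0) = 0"
    unfolding dessin_constraint_def by (simp add: pderiv_empty euler_empty pmult_empty)
  have sm: "(\<Sum>i=0..n. cf F i * cf F (n - i)) = (\<Sum>i\<in>{1..<n}. real i * real (n - i) * (F 0 {#i#} * F 0 {#n-i#}))"
    by (subst conv_trunc) (auto simp: cf_def intro!: sum.cong)
  show ?thesis using eq s unfolding sm by (simp add: cf_def field_simps)
qed

lemma rec2:
  assumes s: "s \<noteq> 0" and FE: "is_dessin_free_energy s u v F" and b: "1 \<le> b"
  shows "cc F (Suc n) b = s * ((u + v) * cc F n b + real b * cf F (n + b)
            + 2 * (\<Sum>i=0..n. cf F i * cc F (n - i) b))"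
proof -
  define T where "T = (\<Sum>i\<in>{1..<n}. real i * real (n - i) * (F 0 {#i#} * ee F (n-i) b + ee F i b * F 0 {#n-i#}))"
  have "0 \<notin># {#b#}" using b by auto
  then have "dessin_constraint s u v F n 0 {#b#} = 0" using FE unfolding is_dessin_free_energy_def by blast
  then have eq: "- (real (n + 1) / s) * ee F (n+1) b + (u + v) * real n * ee F n b
      + real (n + b) * F 0 {#n + b#} + T = 0"
    unfolding dessin_constraint_def T_def using b
    by (simp add: pderiv_single[of _ "F 0"] euler_single pmult_single pderiv_empty[of _ "F 0"] ee_def)
  have eq2: "real (n + 1) * ee F (n+1) b = s * ((u + v) * real n * ee F n b
      + real (n + b) * F 0 {#n + b#} + T)"
  proof -
    define R where "R = (u + v) * real n * ee F n b + real (n + b) * F 0 {#n + b#} + T"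
    have "real (n + 1) / s * ee F (n+1) b = R" using eq unfolding R_def by linarith
    then have "s * (real (n + 1) / s * ee F (n+1) b) = s * R" by simp
    then show ?thesis using s unfolding R_def[symmetric] by simp
  qed
  have sm1: "(\<Sum>i=0..n. cf F i * cc F (n - i) b) = (\<Sum>i\<in>{1..<n}. real b * (real i * real (n - i) * (F 0 {#i#} * ee F (n-i) b)))"
    by (subst conv_trunc) (auto simp: cf_def cc_def intro!: sum.cong)
  have sm2: "(\<Sum>i=0..n. cf F i * cc F (n - i) b) = (\<Sum>i\<in>{1..<n}. real b * (real i * real (n - i) * (ee F i b * F 0 {#n-i#})))"
    apply (subst conv_comm)
    by (subst conv_trunc) (auto simp: cf_def cc_def intro!: sum.cong)
  have h2: "2 * (\<Sum>i=0..n. cf F i * cc F (n - i) b) = real b * T"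
    unfolding mult_2 T_def
    apply (subst (1) sm1) apply (subst sm2)
    by (simp only: sum_distrib_left distrib_left sum.distrib)
  have "cc F (Suc n) b = real b * (real (n + 1) * ee F (n+1) b)"
    by (simp add: cc_def)
  also have "\<dots> = s * ((u + v) * cc F n b + real b * cf F (n + b) + real b * T)"
    unfolding eq2 by (simp add: cc_def cf_def algebra_simps)
  finally show ?thesis unfolding h2 .
qed



lemma alg1:
  fixes a p q A B C X :: "'a::comm_ring_1"
  assumes "C = a*X*(p*C + C*C + q)" "A = a*p" "B = a^2*(p^2 - 4*q)"
  shows "(1 - A*X - 2*a*X*C)^2 = 1 - 2*A*X + B*X^2"
proof -
  have "(1 - A*X - 2*a*X*C)^2 - (1 - 2*A*X + B*X^2) = -4*a*X*(C - a*X*(p*C + C*C + q))"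
    unfolding assms(2,3) by (simp add: algebra_simps power2_eq_square)
  then show ?thesis using assms(1) by simp
qed

definition Cs :: "(nat \<Rightarrow> pseries) \<Rightarrow> real fps" where "Cs F = Abs_fps (cf F)"

lemma Ceq:
  assumes s: "s \<noteq> 0" and FE: "is_dessin_free_energy s u v F"
  shows "Cs F = fps_const s * fps_X * (fps_const (u+v) * Cs F + Cs F * Cs F + fps_const (u*v))"
proof (rule fps_ext)
  fix n
  show "Cs F $ n = (fps_const s * fps_X * (fps_const (u+v) * Cs F + Cs F * Cs F + fps_const (u*v))) $ n"
  proof (cases n)
    case 0 then show ?thesis by (simp add: Cs_def cf_def)
  next
    case (Suc k)
    then show ?thesis using rec1[OF s FE, of k]
      by (simp add: Cs_def mult.assoc) (simp add: fps_mult_nth)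
  qed
qed

lemma S_form:
  assumes s: "s \<noteq> 0" and FE: "is_dessin_free_energy s u v F"
  shows "sqrtP s u v = 1 - fps_const (s*(u+v)) * fps_X - fps_const (2*s) * fps_X * Cs F"
proof -
  define W where "W = 1 - fps_const (s*(u+v)) * fps_X - fps_const (2*s) * fps_X * Cs F"
  have W2: "W^2 = Pdisc s u v"
  proof -
    have "W = 1 - (fps_const s * fps_const (u+v)) * fps_X - 2 * fps_const s * fps_X * Cs F"
      unfolding W_def by (simp add: numeral_fps_const)
    also have "\<dots>^2 = 1 - 2*(fps_const s * fps_const (u+v))*fps_X
        + (fps_const s^2 * (fps_const (u+v)^2 - 4 * fps_const (u*v)))*fps_X^2"
      by (rule alg1[OF Ceq[OF s FE]]) simp_all
    also have "\<dots> = Pdisc s u v"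
      unfolding Pdisc_def by (simp add: numeral_fps_const power2_eq_square algebra_simps)
    finally show ?thesis .
  qed
  define S where "S = sqrtP s u v"
  have S2: "S^2 = Pdisc s u v"
    unfolding S_def sqrtP_def using power_radical[of "Pdisc s u v" "\<lambda>_ _. 1" 1]
    by (simp add: Pdisc_def numeral_2_eq_2)
  have "(W - S) * (W + S) = 0" using W2 S2 by (simp add: algebra_simps power2_eq_square)
  moreover have "(W + S) $ 0 \<noteq> 0" by (simp add: W_def S_def sqrtP_def Pdisc_def)
  then have "W + S \<noteq> 0" by (metis fps_zero_nth)
  ultimately have "W = S" by simp
  then show ?thesis unfolding W_def S_def by simp
qed



lemma final_alg:
  fixes y1 y2 G D H c1 c2 c2d s1 s2 s2d i1 i2 a p A B :: "'a::idom"
  assumes hG: "G = y1*(y2*D)"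
   and hD: "D = a*y1*(p*D + H + 2*c1*D)"
   and hA: "A = a*p"
   and hS1: "s1 = 1 - A*y1 - 2*a*y1*c1"
   and hS2: "s2 = 1 - A*y2 - 2*a*y2*c2"
   and hSd: "s2d = - A - 2*a*(c2 + y2*c2d)"
   and hSS: "s2*s2d = - A + B*y2"
   and hP2: "s2^2 = 1 - 2*A*y2 + B*y2^2"
   and hH: "y1*(y1*H) - 2*(y1*(y2*H)) + y2*(y2*H) = y2*(y1*c1) - y2*(y1*c2) - y2*(y1*(y2*c2d)) + y2*(y2*(y2*c2d))"
   and hi1: "s1*i1 = 1" and hi2: "s2*i2 = 1"
   and y2: "y2 \<noteq> 0"
  shows "2*(y1-y2)^2*G = y1^2*y2^2*((1 - A*y1 - A*y2 + B*y1*y2)*i1*i2 - 1)"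
proof -
  define Q where "Q = 1 - A*y1 - A*y2 + B*y1*y2"
  define R where "R = y1*c1 - y1*c2 - y1*y2*c2d + y2^2*c2d"
  have X: "a*y1*(p*D + H + 2*c1*D) = a*y1*(p*D + 2*c1*D) + a*y1*H"
    by algebra
  have Ds1: "D*s1 = a*y1*H"
  proof -
    have "D*s1 = D - a*y1*(p*D + 2*c1*D)" unfolding hS1 hA by algebra
    also have "\<dots> = a*y1*H" using hD X by algebra
    finally show ?thesis .
  qed
  have Hc: "(y1-y2)^2*H = y2*R"
    using hH unfolding R_def by algebra
  have R2: "2*a*y2*R = y2*(s2 - s1 + (y1-y2)*s2d)"
    unfolding R_def hS1 hS2 hSd by algebra
  have "2*(y1-y2)^2*G*(s1*s2*y2) = 2*y1*y2*y2*s2*((y1-y2)^2*(D*s1))"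
    unfolding hG by algebra
  also have "\<dots> = 2*y1*y2*y2*s2*(a*y1*((y1-y2)^2*H))"
    unfolding Ds1 by algebra
  also have "\<dots> = y1^2*y2^2*s2*(2*a*y2*R)"
    unfolding Hc by algebra
  also have "\<dots> = y1^2*y2^2*y2*(s2^2 - s1*s2 + (y1-y2)*(s2*s2d))"
    unfolding R2 by algebra
  also have "\<dots> = y1^2*y2^2*y2*(Q - s1*s2)"
    unfolding hP2 hSS Q_def by algebra
  finally have L: "2*(y1-y2)^2*G*(s1*s2*y2) = y1^2*y2^2*y2*(Q - s1*s2)" .
  have "y1^2*y2^2*(Q*i1*i2 - 1)*(s1*s2*y2) = y1^2*y2^2*y2*(Q*(s1*i1)*(s2*i2) - s1*s2)"
    by algebra
  then have Rr: "y1^2*y2^2*(Q*i1*i2 - 1)*(s1*s2*y2) = y1^2*y2^2*y2*(Q - s1*s2)"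
    unfolding hi1 hi2 by simp
  have "s1*s2*y2 \<noteq> 0" using hi1 hi2 y2 by auto
  moreover have "2*(y1-y2)^2*G*(s1*s2*y2) = y1^2*y2^2*(Q*i1*i2 - 1)*(s1*s2*y2)"
    by (simp only: L Rr)
  ultimately show ?thesis unfolding Q_def[symmetric] using mult_right_cancel by blast
qed



definition bv :: "(nat \<Rightarrow> nat \<Rightarrow> real) \<Rightarrow> real fps fps" where
  "bv g = Abs_fps (\<lambda>m. Abs_fps (\<lambda>n. g m n))"

lemma bv_nth [simp]: "bv g $ m $ n = g m n"
  by (simp add: bv_def)

lemma fps2_ext: "(\<And>m n. (A::real fps fps) $ m $ n = B $ m $ n) \<Longrightarrow> A = B"
  by (rule fps_ext, rule fps_ext) simp

lemma emb1_nth [simp]: "emb1 a $ m $ n = (if n = 0 then a $ m else 0)"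
  by (simp add: emb1_def)

lemma emb1_nth' : "emb1 a $ m = fps_const (a $ m)"
  by (simp add: emb1_def)

lemma emb2_nth [simp]: "emb2 a $ m $ n = (if m = 0 then a $ n else 0)"
  by (simp add: emb2_def)

lemma Y1_mult_nth [simp]: "(Y1 * A) $ m $ n = (if m = 0 then 0 else A $ (m - 1) $ n)"
  by (simp add: Y1_def)

lemma Y2_mult_nth [simp]: "(Y2 * A) $ m $ n = (if n = 0 then 0 else A $ m $ (n - 1))"
  by (simp add: Y2_def)

lemma const2_mult_nth [simp]: "(fps_const (fps_const c) * (A::real fps fps)) $ m $ n = c * A $ m $ n"
  by simp

lemma emb1_mult_nth: "(emb1 a * B) $ m $ n = (\<Sum>i=0..m. a $ i * B $ (m - i) $ n)"
proof -
  have "(emb1 a * B) $ m = (\<Sum>i=0..m. fps_const (a$i) * B$(m-i))" by (simp only: fps_mult_nth emb1_nth')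
  then show ?thesis by (simp add: fps_sum_nth)
qed

lemma emb1_mult: "emb1 (a * b) = emb1 a * emb1 b"
  by (rule fps2_ext) (simp add: emb1_mult_nth, simp add: fps_mult_nth)

lemma emb1_add: "emb1 (a + b) = emb1 a + emb1 b"
  by (rule fps2_ext) simp

lemma emb1_diff: "emb1 (a - b) = emb1 a - emb1 b"
  by (rule fps2_ext) simp

lemma emb1_one: "emb1 1 = 1"
  by (rule fps2_ext) simp

lemma emb1_const: "emb1 (fps_const c) = fps_const (fps_const c)"
  by (rule fps2_ext) simp

lemma emb1_X: "emb1 fps_X = Y1"
  by (rule fps2_ext) (simp add: Y1_def)

lemma emb2_mult: "emb2 (a * b) = emb2 a * emb2 b"
  by (simp add: emb2_def)

lemma emb2_add: "emb2 (a + b) = emb2 a + emb2 b"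
  by (simp add: emb2_def)

lemma emb2_diff: "emb2 (a - b) = emb2 a - emb2 b"
  by (simp add: emb2_def)

lemma emb2_one: "emb2 1 = 1"
  by (simp add: emb2_def)

lemma emb2_const: "emb2 (fps_const c) = fps_const (fps_const c)"
  by (simp add: emb2_def)

lemma emb2_X: "emb2 fps_X = Y2"
  by (simp add: emb2_def Y2_def)


declare fps_mult_nth_0[simp del] fps_mult_nth_1'[simp del]

definition Dd :: "(nat \<Rightarrow> pseries) \<Rightarrow> real fps fps" where "Dd F = bv (cc F)"
definition Hh :: "(nat \<Rightarrow> pseries) \<Rightarrow> real fps fps" where
  "Hh F = bv (\<lambda>n b. real b * cf F (n + b))"

lemma G02_eq: "G02 F = Y1 * (Y2 * Dd F)"
proof (rule fps2_ext)
  fix m n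
  show "G02 F $ m $ n = (Y1 * (Y2 * Dd F)) $ m $ n"
    by (cases m; cases n) (auto simp: G02_def Dd_def cc_def ee_def)
qed

lemma D_rec:
  assumes s: "s \<noteq> 0" and FE: "is_dessin_free_energy s u v F"
  shows "Dd F = fps_const (fps_const s) * Y1 * (fps_const (fps_const (u+v)) * Dd F + Hh F
           + fps_const (fps_const 2) * (emb1 (Cs F) * Dd F))"
proof (rule fps2_ext)
  fix m n
  show "Dd F $ m $ n = (fps_const (fps_const s) * Y1 * (fps_const (fps_const (u+v)) * Dd F + Hh F
           + fps_const (fps_const 2) * (emb1 (Cs F) * Dd F))) $ m $ n"
  proof (cases m)
    case 0 then show ?thesis by (simp add: mult.assoc Dd_def cc_def)
  next
    case (Suc k)
    show ?thesis
    proof (cases "n = 0")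
      case True then show ?thesis using Suc by (simp add: mult.assoc Dd_def Hh_def cc_def emb1_mult_nth)
    next
      case False
      then have "1 \<le> n" by simp
      from rec2[OF s FE this, of k] show ?thesis using Suc
        by (simp add: mult.assoc Dd_def Hh_def emb1_mult_nth Cs_def)
    qed
  qed
qed


lemma two_nth2: "(2 * (A::real fps fps)) $ m $ b = 2 * A $ m $ b"
  by (simp add: numeral_fps_const)

lemma H_id:
  "Y1*(Y1*Hh F) - 2*(Y1*(Y2*Hh F)) + Y2*(Y2*Hh F)
   = Y2*(Y1*emb1 (Cs F)) - Y2*(Y1*emb2 (Cs F)) - Y2*(Y1*(Y2*emb2 (fps_deriv (Cs F))))
     + Y2*(Y2*(Y2*emb2 (fps_deriv (Cs F))))"
proof (rule fps2_ext)
  fix m b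
  have c0: "cf F 0 = 0" by (simp add: cf_def)
  have m3: "m = 0 \<or> m = Suc 0 \<or> (\<exists>k. m = Suc (Suc k))" by presburger
  have b3: "b = 0 \<or> b = Suc 0 \<or> (\<exists>j. b = Suc (Suc j))" by presburger
  show "(Y1*(Y1*Hh F) - 2*(Y1*(Y2*Hh F)) + Y2*(Y2*Hh F)) $ m $ b
   = (Y2*(Y1*emb1 (Cs F)) - Y2*(Y1*emb2 (Cs F)) - Y2*(Y1*(Y2*emb2 (fps_deriv (Cs F))))
     + Y2*(Y2*(Y2*emb2 (fps_deriv (Cs F))))) $ m $ b"
    unfolding fps_add_nth fps_sub_nth two_nth2
    using m3 b3
    apply (elim disjE exE)
    apply (simp_all add: Hh_def Cs_def c0)
    apply (simp_all add: algebra_simps)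
    done
qed



lemma S_sq: "(sqrtP s u v)^2 = Pdisc s u v"
  unfolding sqrtP_def using power_radical[of "Pdisc s u v" "\<lambda>_ _. 1" 1]
  by (simp add: Pdisc_def numeral_2_eq_2)

lemma S_0: "sqrtP s u v $ 0 = 1"
  by (simp add: sqrtP_def Pdisc_def)

lemma S_deriv:
  assumes s: "s \<noteq> 0" and FE: "is_dessin_free_energy s u v F"
  shows "fps_deriv (sqrtP s u v) = - fps_const (s*(u+v)) - fps_const (2*s) * (Cs F + fps_X * fps_deriv (Cs F))"
  by (subst S_form[OF s FE]) (simp add: algebra_simps)

lemma emb2_uminus: "emb2 (- a) = - emb2 a"
  by (simp add: emb2_def)

lemma S_SS: "sqrtP s u v * fps_deriv (sqrtP s u v) = - fps_const (s*(u+v)) + fps_const (s^2*(u-v)^2) * fps_X"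
proof -
  have "fps_deriv ((sqrtP s u v)^2) = fps_deriv (Pdisc s u v)" by (simp add: S_sq)
  also have "fps_deriv (Pdisc s u v) = 2 * (- fps_const (s*(u+v)) + fps_const (s^2*(u-v)^2) * fps_X)"
    by (rule fps_ext) (simp add: Pdisc_def power2_eq_square fps_mult_nth numeral_fps_const algebra_simps)
  also have "fps_deriv ((sqrtP s u v)^2) = 2 * (sqrtP s u v * fps_deriv (sqrtP s u v))"
    by (simp add: power2_eq_square algebra_simps)
  finally have e: "2 * (sqrtP s u v * fps_deriv (sqrtP s u v)) = 2 * (- fps_const (s*(u+v)) + fps_const (s^2*(u-v)^2) * fps_X)" .
  show ?thesis by (rule mult_left_cancel[THEN iffD1, OF _ e]) simp
qed

lemma emb2_power: "emb2 (a ^ n) = emb2 a ^ n"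
  by (simp add: emb2_def)

lemma emb2_Y2_ne: "Y2 \<noteq> 0"
proof
  assume "Y2 = 0"
  then have "Y2 $ 0 $ 1 = 0" by simp
  then show False by (simp add: Y2_def)
qed

theorem proposition3p1:
  fixes s u v :: real and F :: "nat \<Rightarrow> pseries"
  assumes "s \<noteq> 0"
    and "is_dessin_free_energy s u v F"
  shows "fps_const 2 * (Y1 - Y2)^2 * G02 F
       = Y1^2 * Y2^2 *
         ((1 - fps_const (fps_const (s * (u + v))) * Y1
             - fps_const (fps_const (s * (u + v))) * Y2
             + fps_const (fps_const (s^2 * (u - v)^2)) * Y1 * Y2)
          * emb1 (inverse (sqrtP s u v)) * emb2 (inverse (sqrtP s u v)) - 1)"
proof -
  note s = assms(1) and FE = assms(2)
  define S where "S = sqrtP s u v"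
  define C where "C = Cs F"
  define a where "a = (fps_const (fps_const s) :: real fps fps)"
  define p where "p = (fps_const (fps_const (u+v)) :: real fps fps)"
  define A where "A = (fps_const (fps_const (s * (u + v))) :: real fps fps)"
  define B where "B = (fps_const (fps_const (s^2 * (u - v)^2)) :: real fps fps)"
  have two: "fps_const (fps_const 2) = (2 :: real fps fps)" by (simp add: numeral_fps_const)
  have two': "fps_const (fps_const (2*s)) = 2 * a" unfolding a_def
    by (simp add: numeral_fps_const)
  have hA: "A = a * p" unfolding A_def a_def p_def by simp
  have hD: "Dd F = a*Y1*(p*Dd F + Hh F + 2*emb1 C*Dd F)"
    using D_rec[OF s FE] unfolding a_def p_def C_def two by (simp add: mult.assoc)
  have hS1: "emb1 S = 1 - A*Y1 - 2*a*Y1*emb1 C"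
    unfolding S_def S_form[OF s FE] C_def A_def
    by (simp add: emb1_diff emb1_mult emb1_one emb1_const emb1_X two')
  have hS2: "emb2 S = 1 - A*Y2 - 2*a*Y2*emb2 C"
    unfolding S_def S_form[OF s FE] C_def A_def
    by (simp add: emb2_diff emb2_mult emb2_one emb2_const emb2_X two')
  have hSd: "emb2 (fps_deriv S) = - A - 2*a*(emb2 C + Y2*emb2 (fps_deriv C))"
    unfolding S_def S_deriv[OF s FE] C_def A_def
    by (simp only: emb2_diff emb2_add emb2_mult emb2_const emb2_X two' emb2_uminus)
  have hSS: "emb2 S * emb2 (fps_deriv S) = - A + B*Y2"
    unfolding emb2_mult[symmetric] S_def S_SS A_def B_def
    by (simp only: emb2_add emb2_mult emb2_const emb2_X emb2_uminus)
  have hP2: "(emb2 S)^2 = 1 - 2*A*Y2 + B*Y2^2"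
  proof -
    have "(emb2 S)^2 = 1 - fps_const (fps_const (2*s*(u+v))) * Y2 + B*Y2^2"
      unfolding emb2_power[symmetric] S_def S_sq Pdisc_def B_def
      by (simp only: emb2_add emb2_diff emb2_mult emb2_const emb2_one emb2_X emb2_power)
    moreover have "fps_const (fps_const (2*s*(u+v))) = 2*A" by (simp add: A_def numeral_fps_const mult.assoc)
    ultimately show ?thesis by (simp add: mult.assoc)
  qed
  have hi1: "emb1 S * emb1 (inverse S) = 1"
    unfolding emb1_mult[symmetric] S_def using S_0[of s u v]
    by (simp add: inverse_mult_eq_1' emb1_one)
  have hi2: "emb2 S * emb2 (inverse S) = 1"
    unfolding emb2_mult[symmetric] S_def using S_0[of s u v]
    by (simp add: inverse_mult_eq_1' emb2_one)
  have main: "2*(Y1-Y2)^2*G02 F = Y1^2*Y2^2*((1 - A*Y1 - A*Y2 + B*Y1*Y2)*emb1 (inverse S)*emb2 (inverse S) - 1)"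
    by (rule final_alg[OF G02_eq hD hA hS1 hS2 hSd hSS hP2 H_id[of F, folded C_def] hi1 hi2 emb2_Y2_ne])
  show ?thesis using main unfolding A_def B_def S_def by (simp add: numeral_fps_const)
qed


end
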